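(* Let $M\subset\mathbb{R}^2$ be open with coordinates $(x,u)$, let $M^{(1)}$ be the first-order jet space with coordinates $(x,u,u_x)$, and consider the ODE $u_{xx}=\phi(x,u,u_x)$ with associated vector field $\mathbf{A}=\partial_x+u_x\partial_u+\phi\,\partial_{u_x}$. Let $(\partial_u,\lambda_1)$ and $(\partial_u,\lambda_2)$ be the canonical representatives of two non-equivalent generalized $\mathcal{C}^\infty$-symmetries of this ODE. Let $\mathbf{X}_i=\partial_u+\lambda_i\partial_{u_x}$, $\rho=\dfrac{\mathbf{X}_1(\lambda_2)-\mathbf{X}_2(\lambda_1)}{\lambda_1-\lambda_2}$, let $f_1,f_2\in C^\infty(M^{(1)})$ satisfy $\dfrac{\mathbf{X}_1(f_2)}{f_2}=\dfrac{\mathbf{X}_2(f_1)}{f_1}=\rho$, let $\mathbf{Y}_i=f_i\mathbf{X}_i$, $\rho_i=\lambda_i-\mathbf{A}(f_i)/f_i$, and let $g_1,g_2\in C^\infty(M^{(1)})$ satisfy $\mathbf{A}(g_1)=\rho_1g_1$, $\mathbf{Y}_2(g_1)=0$, $\mathbf{A}(g_2)=\rho_2g_2$, $\mathbf{Y}_1(g_2)=0$. Then two functionally independent first integrals $I_1$ and $I_2$ of $\mathbf{A}$, associated to $(\partial_u,\lambda_1)$ and $(\partial_u,\lambda_2)$ respectively, can be found by quadratures from the systems $$(I_1)_x=\frac{\lambda_1u_x-\phi}{f_2g_2(\lambda_2-\lambda_1)},\quad (I_1)_u=\frac{-\lambda_1}{f_2g_2(\lambda_2-\lambda_1)},\quad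 (I_1)_{u_x}=\frac{1}{f_2g_2(\lambda_2-\lambda_1)},$$ $$(I_2)_x=\frac{\lambda_2u_x-\phi}{f_1g_1(\lambda_1-\lambda_2)},\quad (I_2)_u=\frac{-\lambda_2}{f_1g_1(\lambda_1-\lambda_2)},\quad (I_2)_{u_x}=\frac{1}{f_1g_1(\lambda_1-\lambda_2)}.$$
   Context: All functions are smooth on $M^{(1)}$ and all statements are local, on an open set where $\lambda_1-\lambda_2$, $f_1,f_2,g_1,g_2$ do not vanish. For smooth $\xi,\eta,\lambda$ on $M^{(1)}$ and $\mathbf{v}=\xi\partial_x+\eta\partial_u$, the $\lambda$-prolongation is $\mathbf{v}^{[\lambda,(1)]}=\mathbf{v}+\big((\mathbf{A}+\lambda)(\eta)-(\mathbf{A}+\lambda)(\xi)u_x\big)\partial_{u_x}$. The pair $(\mathbf{v},\lambda)$ is a generalized $\mathcal{C}^\infty$-symmetry of the ODE if $[\mathbf{v}^{[\lambda,(1)]},\mathbf{A}]=\lambda\,\mathbf{v}^{[\lambda,(1)]}-(\mathbf{A}+\lambda)(\xi)\,\mathbf{A}$. A first integral of $\mathbf{A}$ associated to $(\mathbf{v},\lambda)$ is a function $I\in C^\infty(M^{(1)})$ with $\mathbf{A}(I)=\mathbf{v}^{[\lambda,(1)]}(I)=0$. Two generalized $\mathcal{C}^\infty$-symmetries $(\mathbf{v}_1,\lambda_1)$, $(\mathbf{v}_2,\lambda_2)$ are $\mathbf{A}$-equivalent if $\{\mathbf{A},\mathbf{v}_1^{[\lambda_1,(1)]},\mathbf{v}_2^{[\lambda_2,(1)]}\}$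 is linearly dependent over $C^\infty(M^{(1)})$. If $Q=\eta-\xi u_x$, the canonical representative of the class of $(\mathbf{v},\lambda)$ is $(\partial_u,\lambda+\mathbf{A}(Q)/Q)$. *)

theory Defs
  imports "HOL-Analysis.Analysis"
begin

text \<open>Points of the first-order jet space M^(1) with coordinates (x, u, u_x).\<close>
type_synonym jet = "real \<times> real \<times> real"

text \<open>Coordinate directions: 0 = x, 1 = u, 2 = u_x.\<close>
definition coord_dir :: "nat \<Rightarrow> jet" where
  "coord_dir i = (if i = 0 then (1,0,0) else if i = 1 then (0,1,0) else (0,0,1))"

definition pd :: "nat \<Rightarrow> (jet \<Rightarrow> real) \<Rightarrow> jet \<Rightarrow> real" where
  "pd i f p = frechet_derivative f (at p) (coord_dir i)"

abbreviation "pd_x \<equiv> pd 0"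
abbreviation "pd_u \<equiv> pd 1"
abbreviation "pd_ux \<equiv> pd 2"

fun iter_pd :: "nat list \<Rightarrow> (jet \<Rightarrow> real) \<Rightarrow> jet \<Rightarrow> real" where
  "iter_pd [] f = f"
| "iter_pd (i # is) f = pd i (iter_pd is f)"

definition smooth_on :: "jet set \<Rightarrow> (jet \<Rightarrow> real) \<Rightarrow> bool" where
  "smooth_on U f \<longleftrightarrow> (\<forall>ds. (\<forall>i\<in>set ds. i < 3) \<longrightarrow> (\<forall>p\<in>U. iter_pd ds f differentiable (at p)))"

definition vf :: "(jet \<Rightarrow> real) \<Rightarrow> (jet \<Rightarrow> real) \<Rightarrow> (jet \<Rightarrow> real) \<Rightarrow> (jet \<Rightarrow> real) \<Rightarrow> jet \<Rightarrow> real" where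
  "vf a b c h p = a p * pd_x h p + b p * pd_u h p + c p * pd_ux h p"

definition Avf :: "(jet \<Rightarrow> real) \<Rightarrow> (jet \<Rightarrow> real) \<Rightarrow> jet \<Rightarrow> real" where
  "Avf \<phi> = vf (\<lambda>_. 1) (\<lambda>(x,u,ux). ux) \<phi>"

text \<open>Third coefficient of the lambda-prolongation of v = xi d_x + eta d_u:
  (A + lambda)(eta) - (A + lambda)(xi) u_x.\<close>
definition prol_coeff :: "(jet \<Rightarrow> real) \<Rightarrow> (jet \<Rightarrow> real) \<Rightarrow> (jet \<Rightarrow> real) \<Rightarrow> (jet \<Rightarrow> real) \<Rightarrow> jet \<Rightarrow> real" where
  "prol_coeff \<phi> \<xi> \<eta> lam = (\<lambda>p. (Avf \<phi> \<eta> p + lam p * \<eta> p) - (Avf \<phi> \<xi> p + lam p * \<xi> p) * (snd (snd p)))"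

definition prol :: "(jet \<Rightarrow> real) \<Rightarrow> (jet \<Rightarrow> real) \<Rightarrow> (jet \<Rightarrow> real) \<Rightarrow> (jet \<Rightarrow> real) \<Rightarrow> (jet \<Rightarrow> real) \<Rightarrow> jet \<Rightarrow> real" where
  "prol \<phi> \<xi> \<eta> lam = vf \<xi> \<eta> (prol_coeff \<phi> \<xi> \<eta> lam)"

text \<open>(v, lambda) is a generalized C-infinity symmetry on U:
  [v^[lambda,(1)], A] = lambda v^[lambda,(1)] - (A + lambda)(xi) A,
  as an identity of derivations acting on smooth functions on U.\<close>
definition gen_sym :: "jet set \<Rightarrow> (jet \<Rightarrow> real) \<Rightarrow> (jet \<Rightarrow> real) \<Rightarrow> (jet \<Rightarrow> real) \<Rightarrow> (jet \<Rightarrow> real) \<Rightarrow> bool" where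
  "gen_sym U \<phi> \<xi> \<eta> lam \<longleftrightarrow>
     (\<forall>h. smooth_on U h \<longrightarrow> (\<forall>p\<in>U.
        prol \<phi> \<xi> \<eta> lam (Avf \<phi> h) p - Avf \<phi> (prol \<phi> \<xi> \<eta> lam h) p
        = lam p * prol \<phi> \<xi> \<eta> lam h p - (Avf \<phi> \<xi> p + lam p * \<xi> p) * Avf \<phi> h p))"

text \<open>A-equivalence: {A, v1^[lambda1,(1)], v2^[lambda2,(1)]} linearly dependent
  over the ring C-infinity(U) (coefficientwise as vector fields).\<close>
definition A_equiv :: "jet set \<Rightarrow> (jet \<Rightarrow> real) \<Rightarrow> (jet \<Rightarrow> real) \<Rightarrow> (jet \<Rightarrow> real) \<Rightarrow> (jet \<Rightarrow> real)
    \<Rightarrow> (jet \<Rightarrow> real) \<Rightarrow> (jet \<Rightarrow> real) \<Rightarrow> (jet \<Rightarrow> real) \<Rightarrow> bool" where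
  "A_equiv U \<phi> \<xi>1 \<eta>1 lam1 \<xi>2 \<eta>2 lam2 \<longleftrightarrow>
     (\<exists>a b c. smooth_on U a \<and> smooth_on U b \<and> smooth_on U c \<and>
        (\<exists>p\<in>U. a p \<noteq> 0 \<or> b p \<noteq> 0 \<or> c p \<noteq> 0) \<and>
        (\<forall>p\<in>U. a p * 1 + b p * \<xi>1 p + c p * \<xi>2 p = 0 \<and>
                a p * snd (snd p) + b p * \<eta>1 p + c p * \<eta>2 p = 0 \<and>
                a p * \<phi> p + b p * prol_coeff \<phi> \<xi>1 \<eta>1 lam1 p + c p * prol_coeff \<phi> \<xi>2 \<eta>2 lam2 p = 0))"

definition first_integral_assoc :: "jet set \<Rightarrow> (jet \<Rightarrow> real) \<Rightarrow> (jet \<Rightarrow> real) \<Rightarrow> (jet \<Rightarrow> real)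
    \<Rightarrow> (jet \<Rightarrow> real) \<Rightarrow> (jet \<Rightarrow> real) \<Rightarrow> bool" where
  "first_integral_assoc V \<phi> \<xi> \<eta> lam I \<longleftrightarrow>
     smooth_on V I \<and> (\<forall>p\<in>V. Avf \<phi> I p = 0 \<and> prol \<phi> \<xi> \<eta> lam I p = 0)"

definition func_indep :: "jet set \<Rightarrow> (jet \<Rightarrow> real) \<Rightarrow> (jet \<Rightarrow> real) \<Rightarrow> bool" where
  "func_indep V I J \<longleftrightarrow>
     (\<forall>p\<in>V. \<forall>a b. (\<forall>i<3. a * pd i I p + b * pd i J p = 0) \<longrightarrow> a = 0 \<and> b = 0)"

definition solves_sys :: "jet set \<Rightarrow> (jet \<Rightarrow> real) \<Rightarrow> (jet \<Rightarrow> real) \<Rightarrow> (jet \<Rightarrow> real) \<Rightarrow> (jet \<Rightarrow> real) \<Rightarrow> bool" where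
  "solves_sys V I P Q R \<longleftrightarrow>
     (\<forall>p\<in>V. (I has_derivative (\<lambda>(dx, du, dux). P p * dx + Q p * du + R p * dux)) (at p))"

definition Xvf :: "(jet \<Rightarrow> real) \<Rightarrow> (jet \<Rightarrow> real) \<Rightarrow> jet \<Rightarrow> real" where
  "Xvf lam = vf (\<lambda>_. 0) (\<lambda>_. 1) lam"

end

theory Submission
  imports Defs
begin


definition lin3 :: "real \<Rightarrow> real \<Rightarrow> real \<Rightarrow> jet \<Rightarrow> real" where
  "lin3 a b c = (\<lambda>(x,y,z). x*a + y*b + z*c)"

lemma lin3_apply[simp]: "lin3 a b c (x,y,z) = x*a + y*b + z*c"
  by (simp add: lin3_def)

lemma bl_lin3: "bounded_linear (lin3 a b c)"
  unfolding lin3_def split_beta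
  by (auto intro!: bounded_linear_intros)

lemma diff_pd:
  assumes "f differentiable (at p)"
  shows "(f has_derivative lin3 (pd 0 f p) (pd 1 f p) (pd 2 f p)) (at p)"
proof -
  let ?F = "frechet_derivative f (at p)"
  have h: "(f has_derivative ?F) (at p)" using assms frechet_derivative_works by blast
  then have lin: "linear ?F" using has_derivative_linear by blast
  have "?F = lin3 (pd 0 f p) (pd 1 f p) (pd 2 f p)"
  proof
    fix q :: jet
    obtain x y z where q: "q = (x,y,z)" by (cases q) auto
    have qq: "q = x *\<^sub>R (1,0,0) + y *\<^sub>R (0,1,0) + z *\<^sub>R (0,0,1)" by (simp add: q)
    have "?F (x *\<^sub>R (1,0,0) + y *\<^sub>R (0,1,0) + z *\<^sub>R (0,0,1)) = x *\<^sub>R ?F (1,0,0) + y *\<^sub>R ?F (0,1,0) + z *\<^sub>R ?F (0,0,1)"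
      by (simp only: linear_add[OF lin] linear_scale[OF lin])
    then have "?F q = x * ?F (1,0,0) + y * ?F (0,1,0) + z * ?F (0,0,1)"
      using qq by simp
    then show "?F q = lin3 (pd 0 f p) (pd 1 f p) (pd 2 f p) q"
      by (simp add: q pd_def coord_dir_def)
  qed
  then show ?thesis using h by simp
qed

lemma pd_eq:
  assumes "(f has_derivative lin3 a b c) (at p)"
  shows "pd 0 f p = a" "pd 1 f p = b" "pd 2 f p = c"
  using frechet_derivative_at[OF assms, symmetric]
  by (simp_all add: pd_def coord_dir_def)

lemma hd_const: "((\<lambda>q. k) has_derivative lin3 0 0 0) (at p)"
proof -
  have "lin3 0 0 0 = (\<lambda>_. 0)" by (auto simp: lin3_def)
  then show ?thesis by (simp add: has_derivative_const)
qed

lemma hd_x: "((\<lambda>q::jet. fst q) has_derivative lin3 1 0 0) (at p)"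
proof -
  have "lin3 1 0 0 = fst" by (auto simp: lin3_def)
  then show ?thesis by (simp add: has_derivative_fst[OF has_derivative_ident])
qed

lemma hd_u: "((\<lambda>q::jet. fst (snd q)) has_derivative lin3 0 1 0) (at p)"
proof -
  have "lin3 0 1 0 = (\<lambda>q. fst (snd q))" by (auto simp: lin3_def)
  then show ?thesis by (auto intro!: derivative_eq_intros)
qed

lemma hd_v: "((\<lambda>q::jet. snd (snd q)) has_derivative lin3 0 0 1) (at p)"
proof -
  have "lin3 0 0 1 = (\<lambda>q. snd (snd q))" by (auto simp: lin3_def)
  then show ?thesis by (auto intro!: derivative_eq_intros)
qed

lemma hd_add:
  assumes "(f has_derivative lin3 a b c) (at p)" "(g has_derivative lin3 a' b' c') (at p)"
  shows "((\<lambda>q. f q + g q) has_derivative lin3 (a+a') (b+b') (c+c')) (at p)"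
proof -
  have "lin3 (a+a') (b+b') (c+c') = (\<lambda>h. lin3 a b c h + lin3 a' b' c' h)"
    by (auto simp: lin3_def algebra_simps)
  then show ?thesis using has_derivative_add[OF assms] by simp
qed

lemma hd_diff:
  assumes "(f has_derivative lin3 a b c) (at p)" "(g has_derivative lin3 a' b' c') (at p)"
  shows "((\<lambda>q. f q - g q) has_derivative lin3 (a-a') (b-b') (c-c')) (at p)"
proof -
  have "lin3 (a-a') (b-b') (c-c') = (\<lambda>h. lin3 a b c h - lin3 a' b' c' h)"
    by (auto simp: lin3_def algebra_simps)
  then show ?thesis using has_derivative_diff[OF assms] by simp
qed

lemma hd_minus:
  assumes "(f has_derivative lin3 a b c) (at p)"
  shows "((\<lambda>q. - f q) has_derivative lin3 (-a) (-b) (-c)) (at p)"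
proof -
  have "lin3 (-a) (-b) (-c) = (\<lambda>h. - lin3 a b c h)"
    by (auto simp: lin3_def algebra_simps)
  then show ?thesis using has_derivative_minus[OF assms] by simp
qed

lemma hd_mult:
  assumes "(f has_derivative lin3 a b c) (at p)" "(g has_derivative lin3 a' b' c') (at p)"
  shows "((\<lambda>q. f q * g q) has_derivative lin3 (f p*a'+a*g p) (f p*b'+b*g p) (f p*c'+c*g p)) (at p)"
proof -
  have "lin3 (f p*a'+a*g p) (f p*b'+b*g p) (f p*c'+c*g p) = (\<lambda>h. f p * lin3 a' b' c' h + lin3 a b c h * g p)"
    by (auto simp: lin3_def algebra_simps)
  then show ?thesis using has_derivative_mult[OF assms] by simp
qed

lemma hd_divide:
  assumes "(f has_derivative lin3 a b c) (at p)" "(g has_derivative lin3 a' b' c') (at p)" "g p \<noteq> 0"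
  shows "((\<lambda>q. f q / g q) has_derivative
     lin3 ((a*g p - f p*a')/(g p)^2) ((b*g p - f p*b')/(g p)^2) ((c*g p - f p*c')/(g p)^2)) (at p)"
proof -
  have "lin3 ((a*g p - f p*a')/(g p)^2) ((b*g p - f p*b')/(g p)^2) ((c*g p - f p*c')/(g p)^2)
     = (\<lambda>h. - (f p * (inverse (g p) * lin3 a' b' c' h * inverse (g p))) + lin3 a b c h * inverse (g p))"
    using assms(3) by (auto simp: lin3_def field_simps power2_eq_square)
  then show ?thesis using has_derivative_divide[OF assms] by (simp add: divide_inverse)
qed



lemma hd_local:
  assumes "open V" "p \<in> V" "\<forall>q\<in>V. f q = g q"
  shows "(f has_derivative D) (at p) \<longleftrightarrow> (g has_derivative D) (at p)"
proof
  assume "(f has_derivative D) (at p)"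
  then show "(g has_derivative D) (at p)"
    by (rule has_derivative_transform_within_open[OF _ assms(1,2)]) (use assms(3) in auto)
next
  assume "(g has_derivative D) (at p)"
  then show "(f has_derivative D) (at p)"
    by (rule has_derivative_transform_within_open[OF _ assms(1,2)]) (use assms(3) in auto)
qed

lemma pd_local:
  assumes "open V" "p \<in> V" "\<forall>q\<in>V. f q = g q"
  shows "pd i f p = pd i g p"
proof -
  have "frechet_derivative f (at p) = frechet_derivative g (at p)"
    unfolding frechet_derivative_def using hd_local[OF assms] by simp
  then show ?thesis by (simp add: pd_def)
qed


lemma pd_add_at:
  assumes "f differentiable (at p)" "g differentiable (at p)"
  shows "pd i (\<lambda>q. f q + g q) p = pd i f p + pd i g p"
proof -
  have "((\<lambda>q. f q + g q) has_derivative (\<lambda>h. frechet_derivative f (at p) h + frechet_derivative g (at p) h)) (at p)"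
    using assms by (intro has_derivative_add) (auto simp: frechet_derivative_works[symmetric])
  from frechet_derivative_at[OF this, symmetric] show ?thesis by (simp add: pd_def)
qed

lemma pd_mult_at:
  assumes "f differentiable (at p)" "g differentiable (at p)"
  shows "pd i (\<lambda>q. f q * g q) p = f p * pd i g p + pd i f p * g p"
proof -
  have "((\<lambda>q. f q * g q) has_derivative (\<lambda>h. f p * frechet_derivative g (at p) h + frechet_derivative f (at p) h * g p)) (at p)"
    using assms by (intro has_derivative_mult) (auto simp: frechet_derivative_works[symmetric])
  from frechet_derivative_at[OF this, symmetric] show ?thesis by (simp add: pd_def)
qed

lemma pd_inv_at:
  assumes "f differentiable (at p)" "f p \<noteq> 0"
  shows "pd i (\<lambda>q. 1 / f q) p = (-1) * pd i f p * ((1 / f p) * (1 / f p))"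
proof -
  have "((\<lambda>q. inverse (f q)) has_derivative (\<lambda>h. - (inverse (f p) * frechet_derivative f (at p) h * inverse (f p)))) (at p)"
    using assms by (intro Deriv.has_derivative_inverse) (auto simp: frechet_derivative_works[symmetric])
  from frechet_derivative_at[OF this, symmetric] show ?thesis
    by (simp add: pd_def divide_inverse)
qed

lemma diff_local:
  assumes "open V" "p \<in> V" "\<forall>q\<in>V. f q = g q"
  shows "f differentiable (at p) \<longleftrightarrow> g differentiable (at p)"
  unfolding differentiable_def using hd_local[OF assms] by simp

lemma iter_pd_local:
  assumes "open V" "\<forall>q\<in>V. f q = g q"
  shows "\<forall>q\<in>V. iter_pd ds f q = iter_pd ds g q"
  using assms(2)
proof (induction ds)
  case Nil then show ?case by simp
next
  case (Cons i ds)
  then show ?case using pd_local[OF assms(1)] by simp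
qed

lemma iter_pd_snoc: "iter_pd (ds @ [i]) f = iter_pd ds (pd i f)"
  by (induction ds) auto

definition sm_n :: "nat \<Rightarrow> jet set \<Rightarrow> (jet \<Rightarrow> real) \<Rightarrow> bool" where
  "sm_n n U f \<longleftrightarrow> (\<forall>ds. length ds \<le> n \<longrightarrow> (\<forall>i\<in>set ds. i < 3) \<longrightarrow> (\<forall>p\<in>U. iter_pd ds f differentiable (at p)))"

lemma smooth_sm_n: "smooth_on U f \<longleftrightarrow> (\<forall>n. sm_n n U f)"
  unfolding smooth_on_def sm_n_def by auto

lemma sm_n_0: "sm_n 0 U f \<longleftrightarrow> (\<forall>p\<in>U. f differentiable (at p))"
  unfolding sm_n_def by auto

lemma sm_n_Suc: "sm_n (Suc n) U f \<longleftrightarrow> (\<forall>p\<in>U. f differentiable (at p)) \<and> (\<forall>i<3. sm_n n U (pd i f))"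
proof
  assume a: "sm_n (Suc n) U f"
  have "\<forall>p\<in>U. f differentiable (at p)"
    using a unfolding sm_n_def
    by (metis iter_pd.simps(1) empty_iff list.set(1) list.size(3) zero_le)
  moreover have "sm_n n U (pd i f)" if "i < 3" for i
    unfolding sm_n_def
  proof (intro allI impI)
    fix ds :: "nat list" assume "length ds \<le> n" "\<forall>i\<in>set ds. i < 3"
    then have "length (ds @ [i]) \<le> Suc n" "\<forall>j\<in>set (ds @ [i]). j < 3" using that by auto
    then have "\<forall>p\<in>U. iter_pd (ds @ [i]) f differentiable at p"
      using a unfolding sm_n_def by blast
    then show "\<forall>p\<in>U. iter_pd ds (pd i f) differentiable at p"
      by (simp add: iter_pd_snoc)
  qed
  ultimately show "(\<forall>p\<in>U. f differentiable (at p)) \<and> (\<forall>i<3. sm_n n U (pd i f))" by blast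
next
  assume a: "(\<forall>p\<in>U. f differentiable (at p)) \<and> (\<forall>i<3. sm_n n U (pd i f))"
  show "sm_n (Suc n) U f"
    unfolding sm_n_def
  proof (intro allI impI)
    fix ds :: "nat list" assume l: "length ds \<le> Suc n" and s: "\<forall>i\<in>set ds. i < 3"
    show "\<forall>p\<in>U. iter_pd ds f differentiable at p"
    proof (cases ds rule: rev_cases)
      case Nil then show ?thesis using a by simp
    next
      case (snoc ys y)
      then have "length ys \<le> n" "y < 3" "\<forall>i\<in>set ys. i < 3" using l s by auto
      then show ?thesis using a snoc unfolding sm_n_def by (simp add: iter_pd_snoc)
    qed
  qed
qed

lemma sm_n_mono: "sm_n (Suc n) U f \<Longrightarrow> sm_n n U f"
  unfolding sm_n_def by auto

lemma sm_n_local: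
  assumes "open U" "\<forall>q\<in>U. f q = g q" "sm_n n U f"
  shows "sm_n n U g"
  unfolding sm_n_def
proof (intro allI impI ballI)
  fix ds :: "nat list" and p assume "length ds \<le> n" "\<forall>i\<in>set ds. i < 3" "p \<in> U"
  then have "iter_pd ds f differentiable (at p)" using assms(3) unfolding sm_n_def by blast
  then show "iter_pd ds g differentiable (at p)"
    using diff_local[OF assms(1) \<open>p\<in>U\<close>] iter_pd_local[OF assms(1,2)] by blast
qed

lemma pd_global:
  assumes "\<And>p. (f has_derivative lin3 (a p) (b p) (c p)) (at p)"
  shows "pd 0 f = a" "pd 1 f = b" "pd 2 f = c"
  using pd_eq[OF assms] by auto

lemma pd_fun_cases: "(i::nat) < 3 \<Longrightarrow> (i = 0 \<Longrightarrow> P) \<Longrightarrow> (i = 1 \<Longrightarrow> P) \<Longrightarrow> (i = 2 \<Longrightarrow> P) \<Longrightarrow> P"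
  by linarith

lemma sm_n_const: "sm_n n U (\<lambda>_. k)"
proof (induction n arbitrary: k)
  case 0 then show ?case by (simp add: sm_n_0)
next
  case (Suc n)
  have "pd i (\<lambda>_. k) = (\<lambda>_. 0)" for i
    by (auto simp: pd_def frechet_derivative_at[OF has_derivative_const, symmetric])
  then show ?case using Suc by (simp add: sm_n_Suc)
qed

lemma pd_const0: "pd i (\<lambda>_. k) p = 0"
  by (simp add: pd_def frechet_derivative_at[OF has_derivative_const, symmetric])

lemma pd_lin_global:
  assumes "\<And>p. (f has_derivative lin3 a b c) (at p)" "i < 3"
  shows "pd i f = (\<lambda>_. if i = 0 then a else if i = 1 then b else c)"
proof -
  consider "i=0" | "i=1" | "i=2" using assms(2) by linarith
  then show ?thesis using pd_eq[OF assms(1)] by cases auto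
qed

lemma sm_n_lin:
  assumes "\<And>p. (f has_derivative lin3 a b c) (at p)"
  shows "sm_n n U f"
proof (cases n)
  case 0 then show ?thesis using assms by (auto simp: sm_n_0 differentiable_def)
next
  case (Suc m)
  then show ?thesis using assms pd_lin_global[OF assms] sm_n_const
    by (auto simp: sm_n_Suc differentiable_def)
qed

lemma sm_n_add:
  assumes "open U" shows "sm_n n U f \<Longrightarrow> sm_n n U g \<Longrightarrow> sm_n n U (\<lambda>q. f q + g q)"
proof (induction n arbitrary: f g)
  case 0 then show ?case by (simp add: sm_n_0)
next
  case (Suc n)
  have d: "\<forall>p\<in>U. f differentiable (at p)" "\<forall>p\<in>U. g differentiable (at p)"
    using Suc.prems by (auto simp: sm_n_Suc)
  have "sm_n n U (pd i (\<lambda>q. f q + g q))" if "i < 3" for i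
  proof -
    have "\<forall>q\<in>U. pd i f q + pd i g q = pd i (\<lambda>q. f q + g q) q"
      using d by (simp add: pd_add_at)
    moreover have "sm_n n U (\<lambda>q. pd i f q + pd i g q)"
      using Suc that by (simp add: sm_n_Suc)
    ultimately show ?thesis by (rule sm_n_local[OF assms])
  qed
  then show ?case using d by (simp add: sm_n_Suc)
qed

lemma sm_n_mult:
  assumes "open U" shows "sm_n n U f \<Longrightarrow> sm_n n U g \<Longrightarrow> sm_n n U (\<lambda>q. f q * g q)"
proof (induction n arbitrary: f g)
  case 0 then show ?case by (simp add: sm_n_0)
next
  case (Suc n)
  have d: "\<forall>p\<in>U. f differentiable (at p)" "\<forall>p\<in>U. g differentiable (at p)"
    using Suc.prems by (auto simp: sm_n_Suc)
  have "sm_n n U (pd i (\<lambda>q. f q * g q))" if "i < 3" for i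
  proof -
    have "\<forall>q\<in>U. f q * pd i g q + pd i f q * g q = pd i (\<lambda>q. f q * g q) q"
      using d by (simp add: pd_mult_at)
    moreover have "sm_n n U (\<lambda>q. f q * pd i g q + pd i f q * g q)"
    proof -
      have "sm_n n U f" "sm_n n U g" using Suc.prems sm_n_mono by blast+
      moreover have "sm_n n U (pd i f)" "sm_n n U (pd i g)" using Suc.prems that by (simp_all add: sm_n_Suc)
      ultimately show ?thesis
        using sm_n_add[OF assms, of n "\<lambda>q. f q * pd i g q" "\<lambda>q. pd i f q * g q"]
          Suc.IH[of f "pd i g"] Suc.IH[of "pd i f" g] by blast
    qed
    ultimately show ?thesis by (rule sm_n_local[OF assms])
  qed
  then show ?case using d by (simp add: sm_n_Suc)
qed

lemma sm_n_inv:
  assumes "open U" shows "sm_n n U f \<Longrightarrow> \<forall>q\<in>U. f q \<noteq> 0 \<Longrightarrow> sm_n n U (\<lambda>q. 1 / f q)"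
proof (induction n arbitrary: f)
  case 0 then show ?case by (simp add: sm_n_0)
next
  case (Suc n)
  have d: "\<forall>p\<in>U. f differentiable (at p)"
    using Suc.prems by (auto simp: sm_n_Suc)
  have d2: "\<forall>p\<in>U. (\<lambda>q. 1 / f q) differentiable (at p)"
    using d Suc.prems(2) by auto
  have "sm_n n U (pd i (\<lambda>q. 1 / f q))" if "i < 3" for i
  proof -
    have "\<forall>q\<in>U. (-1) * pd i f q * ((1 / f q) * (1 / f q)) = pd i (\<lambda>q. 1 / f q) q"
      using d Suc.prems(2) by (simp add: pd_inv_at)
    moreover have "sm_n n U (\<lambda>q. (-1) * pd i f q * ((1 / f q) * (1 / f q)))"
    proof -
      have "sm_n n U (\<lambda>q. 1 / f q)" using Suc.prems sm_n_mono Suc.IH by blast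
      moreover have "sm_n n U (pd i f)" using Suc.prems that by (simp add: sm_n_Suc)
      ultimately show ?thesis
        using sm_n_mult[OF assms, of n "\<lambda>q. (-1) * pd i f q" "\<lambda>q. (1 / f q) * (1 / f q)"]
          sm_n_mult[OF assms, of n "\<lambda>q. 1 / f q" "\<lambda>q. 1 / f q"]
          sm_n_mult[OF assms, of n "\<lambda>_. -1" "pd i f"] sm_n_const[of n U "-1"] by blast
    qed
    ultimately show ?thesis by (rule sm_n_local[OF assms])
  qed
  then show ?case using d2 by (simp add: sm_n_Suc)
qed

lemma sm_const[simp]: "smooth_on U (\<lambda>_. k)"
  by (simp add: smooth_sm_n sm_n_const)

lemma sm_x: "smooth_on U (\<lambda>q. fst q)"
  by (simp add: smooth_sm_n sm_n_lin[OF hd_x])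
lemma sm_u: "smooth_on U (\<lambda>q. fst (snd q))"
  by (simp add: smooth_sm_n sm_n_lin[OF hd_u])
lemma sm_v: "smooth_on U (\<lambda>q. snd (snd q))"
  by (simp add: smooth_sm_n sm_n_lin[OF hd_v])

lemma sm_add: "open U \<Longrightarrow> smooth_on U f \<Longrightarrow> smooth_on U g \<Longrightarrow> smooth_on U (\<lambda>q. f q + g q)"
  by (simp add: smooth_sm_n sm_n_add)
lemma sm_mult: "open U \<Longrightarrow> smooth_on U f \<Longrightarrow> smooth_on U g \<Longrightarrow> smooth_on U (\<lambda>q. f q * g q)"
  by (simp add: smooth_sm_n sm_n_mult)
lemma sm_inv: "open U \<Longrightarrow> smooth_on U f \<Longrightarrow> \<forall>q\<in>U. f q \<noteq> 0 \<Longrightarrow> smooth_on U (\<lambda>q. 1 / f q)"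
  by (simp add: smooth_sm_n sm_n_inv)
lemma sm_local: "open U \<Longrightarrow> \<forall>q\<in>U. f q = g q \<Longrightarrow> smooth_on U f \<Longrightarrow> smooth_on U g"
  using sm_n_local by (metis smooth_sm_n)
lemma sm_minus: "open U \<Longrightarrow> smooth_on U f \<Longrightarrow> smooth_on U (\<lambda>q. - f q)"
  using sm_mult[of U "\<lambda>_. -1" f] by simp
lemma sm_diff: "open U \<Longrightarrow> smooth_on U f \<Longrightarrow> smooth_on U g \<Longrightarrow> smooth_on U (\<lambda>q. f q - g q)"
  using sm_add[of U f "\<lambda>q. - g q"] sm_minus by simp
lemma sm_divide: "open U \<Longrightarrow> smooth_on U f \<Longrightarrow> smooth_on U g \<Longrightarrow> \<forall>q\<in>U. g q \<noteq> 0 \<Longrightarrow> smooth_on U (\<lambda>q. f q / g q)"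
  using sm_mult[of U f "\<lambda>q. 1 / g q"] sm_inv by simp
lemma sm_subset: "smooth_on U f \<Longrightarrow> V \<subseteq> U \<Longrightarrow> smooth_on V f"
  unfolding smooth_on_def by blast
lemma sm_pd: "smooth_on U f \<Longrightarrow> i < 3 \<Longrightarrow> smooth_on U (pd i f)"
  unfolding smooth_sm_n by (metis sm_n_Suc)
lemma sm_diffble: "smooth_on U f \<Longrightarrow> p \<in> U \<Longrightarrow> f differentiable (at p)"
  unfolding smooth_sm_n sm_n_0 by (metis sm_n_0)



lemma hd_gam:
  assumes "(f has_derivative lin3 a b c) (at (p + t *\<^sub>R (y - p)))"
  shows "((\<lambda>y. f (p + t *\<^sub>R (y - p))) has_derivative lin3 (t*a) (t*b) (t*c)) (at y)"
proof -
  have i: "((\<lambda>y. p + t *\<^sub>R (y - p)) has_derivative (\<lambda>h. t *\<^sub>R h)) (at y)"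
    by (auto intro!: derivative_eq_intros)
  have e: "(\<lambda>h. lin3 a b c (t *\<^sub>R h)) = lin3 (t*a) (t*b) (t*c)"
    by (auto simp: lin3_def)
  show ?thesis using has_derivative_compose[OF i assms] e by simp
qed

lemma vd_gam:
  assumes "(f has_derivative lin3 a b c) (at (p + t *\<^sub>R d))"
  shows "((\<lambda>s. f (p + s *\<^sub>R d)) has_vector_derivative (a * fst d + b * fst (snd d) + c * snd (snd d))) (at t within S)"
proof -
  have i: "((\<lambda>s. p + s *\<^sub>R d) has_derivative (\<lambda>s. s *\<^sub>R d)) (at t within S)"
    by (auto intro!: derivative_eq_intros)
  obtain d1 d2 d3 where d: "d = (d1,d2,d3)" by (cases d) auto
  have e: "(\<lambda>s. lin3 a b c (s *\<^sub>R d)) = (\<lambda>s. s *\<^sub>R (a * fst d + b * fst (snd d) + c * snd (snd d)))"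
    by (auto simp: lin3_def d algebra_simps)
  show ?thesis using has_derivative_compose[OF i assms] e
    by (simp add: has_vector_derivative_def)
qed

lemma hd_dx: "((\<lambda>y::jet. fst (y - p)) has_derivative lin3 1 0 0) (at y)"
  using hd_diff[OF hd_x hd_const[of "fst p"]] by simp
lemma hd_du: "((\<lambda>y::jet. fst (snd (y - p))) has_derivative lin3 0 1 0) (at y)"
  using hd_diff[OF hd_u hd_const[of "fst (snd p)"]] by simp
lemma hd_dv: "((\<lambda>y::jet. snd (snd (y - p))) has_derivative lin3 0 0 1) (at y)"
  using hd_diff[OF hd_v hd_const[of "snd (snd p)"]] by simp

lemma gam_in:
  fixes y p :: jet
  assumes "y \<in> ball p r" "t \<in> {0..1::real}"
  shows "p + t *\<^sub>R (y - p) \<in> ball p r"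
proof -
  have "dist p (p + t *\<^sub>R (y - p)) = \<bar>t\<bar> * norm (y - p)"
    by (simp add: dist_norm)
  also have "\<dots> \<le> norm (y - p)" using assms(2) by (auto intro: mult_left_le_one_le)
  also have "\<dots> < r" using assms(1) by (simp add: dist_norm norm_minus_commute)
  finally show ?thesis by simp
qed

lemma cont_gam:
  fixes p :: jet and g :: "jet \<Rightarrow> real"
  assumes "continuous_on U g" "ball p r \<subseteq> U"
  shows "continuous_on (ball p r \<times> {0..1}) (\<lambda>x. g (p + snd x *\<^sub>R (fst x - p)))"
proof (rule continuous_on_compose2[OF assms(1)])
  show "continuous_on (ball p r \<times> {0..1}) (\<lambda>x. p + snd x *\<^sub>R (fst x - p))"
    by (intro continuous_intros)
  show "(\<lambda>x. p + snd x *\<^sub>R (fst x - p)) ` (ball p r \<times> {0..1}) \<subseteq> U"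
    using gam_in assms(2) by fastforce
qed

lemma cont_smooth: "smooth_on U f \<Longrightarrow> continuous_on U f"
  by (meson continuous_at_imp_continuous_on differentiable_imp_continuous_within sm_diffble)

lemma poincare:
  fixes P Q R :: "jet \<Rightarrow> real"
  assumes oU: "open U" and pU: "p \<in> U"
    and sP: "smooth_on U P" and sQ: "smooth_on U Q" and sR: "smooth_on U R"
    and cl: "\<forall>q\<in>U. pd 1 P q = pd 0 Q q \<and> pd 2 P q = pd 0 R q \<and> pd 2 Q q = pd 1 R q"
  shows "\<exists>V. open V \<and> p \<in> V \<and> V \<subseteq> U \<and> (\<exists>I. solves_sys V I P Q R)"
proof -
  obtain r where r: "r > 0" "ball p r \<subseteq> U" using oU pU open_contains_ball by blast
  define V where "V = ball p r"
  have VU: "V \<subseteq> U" using r V_def by simp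
  define g where "g = (\<lambda>y t. p + t *\<^sub>R (y - p))"
  define F where "F = (\<lambda>y t. P (g y t) * fst (y - p) + Q (g y t) * fst (snd (y - p)) + R (g y t) * snd (snd (y - p)))"
  define c0 where "c0 = (\<lambda>y t. t * (pd 0 P (g y t) * fst (y - p) + pd 0 Q (g y t) * fst (snd (y - p)) + pd 0 R (g y t) * snd (snd (y - p))) + P (g y t))"
  define c1 where "c1 = (\<lambda>y t. t * (pd 1 P (g y t) * fst (y - p) + pd 1 Q (g y t) * fst (snd (y - p)) + pd 1 R (g y t) * snd (snd (y - p))) + Q (g y t))"
  define c2 where "c2 = (\<lambda>y t. t * (pd 2 P (g y t) * fst (y - p) + pd 2 Q (g y t) * fst (snd (y - p)) + pd 2 R (g y t) * snd (snd (y - p))) + R (g y t))"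
  define fx where "fx = (\<lambda>y t. Blinfun (lin3 (c0 y t) (c1 y t) (c2 y t)))"
  have fx_apply: "blinfun_apply (fx y t) = lin3 (c0 y t) (c1 y t) (c2 y t)" for y t
    unfolding fx_def by (rule bounded_linear_Blinfun_apply[OF bl_lin3])
  have gin: "g y t \<in> U" if "y \<in> V" "t \<in> {0..1}" for y t
    using gam_in[OF _ that(2), of y p r] that(1) r V_def g_def by auto
  have dP: "(P has_derivative lin3 (pd 0 P q) (pd 1 P q) (pd 2 P q)) (at q)" if "q \<in> U" for q
    using diff_pd sm_diffble[OF sP that] by blast
  have dQ: "(Q has_derivative lin3 (pd 0 Q q) (pd 1 Q q) (pd 2 Q q)) (at q)" if "q \<in> U" for q
    using diff_pd sm_diffble[OF sQ that] by blast
  have dR: "(R has_derivative lin3 (pd 0 R q) (pd 1 R q) (pd 2 R q)) (at q)" if "q \<in> U" for q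
    using diff_pd sm_diffble[OF sR that] by blast
  have fx_ok: "((\<lambda>y. F y t) has_derivative blinfun_apply (fx y t)) (at y within V)"
    if "y \<in> V" "t \<in> cbox 0 1" for y t
  proof -
    have tt: "t \<in> {0..1}" using that(2) by simp
    note a = hd_gam[OF dP[OF gin[OF that(1) tt, unfolded g_def]]]
             hd_gam[OF dQ[OF gin[OF that(1) tt, unfolded g_def]]]
             hd_gam[OF dR[OF gin[OF that(1) tt, unfolded g_def]]]
    have "((\<lambda>y. F y t) has_derivative lin3 (c0 y t) (c1 y t) (c2 y t)) (at y)"
      unfolding F_def g_def
      using hd_add[OF hd_add[OF hd_mult[OF a(1) hd_dx] hd_mult[OF a(2) hd_du]] hd_mult[OF a(3) hd_dv]]
      by (simp add: c0_def c1_def c2_def g_def algebra_simps)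
    then show ?thesis by (simp add: fx_apply has_derivative_at_withinI)
  qed

  have cg: "continuous_on (V \<times> {0..1}) (\<lambda>x. h (g (fst x) (snd x)))" if "continuous_on U h" for h :: "jet \<Rightarrow> real"
    using cont_gam[OF that r(2)] by (simp add: V_def g_def)
  have cg1: "continuous_on {0..1} (\<lambda>t. h (g y t))" if "continuous_on U h" "y \<in> V" for h :: "jet \<Rightarrow> real" and y
  proof -
    have c: "continuous_on {0..1} (\<lambda>t. (y,t))" by (intro continuous_intros)
    have s: "(\<lambda>t. (y,t)) ` {0..1} \<subseteq> V \<times> {0..1}" using that(2) by auto
    have "continuous_on {0..1} (\<lambda>t. (\<lambda>x. h (g (fst x) (snd x))) (y,t))"
      by (rule continuous_on_compose2[OF cg[OF that(1)] c s])
    then show ?thesis by simp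
  qed
  have cPQR: "continuous_on U P" "continuous_on U Q" "continuous_on U R"
    using cont_smooth[OF sP] cont_smooth[OF sQ] cont_smooth[OF sR] by auto
  have cpd: "continuous_on U (pd i P)" "continuous_on U (pd i Q)" "continuous_on U (pd i R)" if "i < 3" for i
    using cont_smooth[OF sm_pd[OF sP that]] cont_smooth[OF sm_pd[OF sQ that]] cont_smooth[OF sm_pd[OF sR that]] by auto
  note cgs = cg[OF cPQR(1)] cg[OF cPQR(2)] cg[OF cPQR(3)]
    cg[OF cpd(1)[of 0]] cg[OF cpd(2)[of 0]] cg[OF cpd(3)[of 0]]
    cg[OF cpd(1)[of 1]] cg[OF cpd(2)[of 1]] cg[OF cpd(3)[of 1]]
    cg[OF cpd(1)[of 2]] cg[OF cpd(2)[of 2]] cg[OF cpd(3)[of 2]]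
  have cc: "continuous_on (V \<times> {0..1}) (\<lambda>x. c0 (fst x) (snd x))"
      "continuous_on (V \<times> {0..1}) (\<lambda>x. c1 (fst x) (snd x))"
      "continuous_on (V \<times> {0..1}) (\<lambda>x. c2 (fst x) (snd x))"
    unfolding c0_def c1_def c2_def by (intro continuous_intros cgs; simp)+
  have cont_fx: "continuous_on (V \<times> cbox 0 1) (\<lambda>(x, t). fx x t)"
  proof (rule continuous_on_blinfun_componentwise)
    fix i :: jet assume "i \<in> Basis"
    then have "i = (1,0,0) \<or> i = (0,1,0) \<or> i = (0,0,1)"
      by (auto simp: Basis_prod_def zero_prod_def)
    then show "continuous_on (V \<times> cbox 0 1) (\<lambda>x. blinfun_apply (case x of (x, t) \<Rightarrow> fx x t) i)"
      using cc by (auto simp: fx_apply split_beta)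
  qed
  have int_fx: "fx y integrable_on cbox 0 1" if "y \<in> V" for y
  proof -
    have c: "continuous_on {0..1::real} (\<lambda>t. (y,t))" by (intro continuous_intros)
    have s: "(\<lambda>t. (y,t)) ` {0..1::real} \<subseteq> V \<times> cbox 0 1" using that by (auto simp: box_real)
    have "continuous_on {0..1} (\<lambda>t. (\<lambda>(x, t). fx x t) (y,t))"
      by (rule continuous_on_compose2[OF cont_fx c s])
    then have "continuous_on {0..1} (fx y)" by simp
    then show ?thesis by (simp add: integrable_continuous_interval)
  qed
  have int_F: "F y integrable_on cbox 0 1" if "y \<in> V" for y
  proof -
    have "continuous_on {0..1} (F y)"
      unfolding F_def using cg1[OF cPQR(1) that] cg1[OF cPQR(2) that] cg1[OF cPQR(3) that]
      by (intro continuous_intros) auto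
    then show ?thesis by (simp add: integrable_continuous_interval)
  qed
  define I where "I = (\<lambda>y. integral (cbox 0 (1::real)) (F y))"
  have ftc: "(c0 y has_integral P y) {0..1} \<and> (c1 y has_integral Q y) {0..1} \<and> (c2 y has_integral R y) {0..1}"
    if yV: "y \<in> V" for y
  proof -
    have vd: "((\<lambda>t. t * P (g y t)) has_vector_derivative c0 y t) (at t within {0..1}) \<and>
              ((\<lambda>t. t * Q (g y t)) has_vector_derivative c1 y t) (at t within {0..1}) \<and>
              ((\<lambda>t. t * R (g y t)) has_vector_derivative c2 y t) (at t within {0..1})"
      if tt: "t \<in> {0..1}" for t
    proof -
      have gU: "g y t \<in> U" using gin[OF yV tt] .
      note cls = cl[rule_format, OF gU]
      have i: "((\<lambda>t::real. t) has_vector_derivative 1) (at t within {0..1})"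
        by (rule has_vector_derivative_id)
      note vP = vd_gam[OF dP[OF gU, unfolded g_def], of "{0..1}"]
      note vQ = vd_gam[OF dQ[OF gU, unfolded g_def], of "{0..1}"]
      note vR = vd_gam[OF dR[OF gU, unfolded g_def], of "{0..1}"]
      show ?thesis
        using has_vector_derivative_mult[OF i vP] has_vector_derivative_mult[OF i vQ]
          has_vector_derivative_mult[OF i vR] cls
        by (simp add: g_def c0_def c1_def c2_def algebra_simps)
    qed
    have "(c0 y has_integral (1 * P (g y 1) - 0 * P (g y 0))) {0..1}"
      by (rule fundamental_theorem_of_calculus) (use vd in auto)
    moreover have "(c1 y has_integral (1 * Q (g y 1) - 0 * Q (g y 0))) {0..1}"
      by (rule fundamental_theorem_of_calculus) (use vd in auto)
    moreover have "(c2 y has_integral (1 * R (g y 1) - 0 * R (g y 0))) {0..1}"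
      by (rule fundamental_theorem_of_calculus) (use vd in auto)
    ultimately show ?thesis by (simp add: g_def)
  qed
  have "solves_sys V I P Q R"
    unfolding solves_sys_def
  proof
    fix y assume yV: "y \<in> V"
    have L: "(I has_derivative blinfun_apply (integral (cbox 0 1) (fx y))) (at y within V)"
      unfolding I_def
      by (rule leibniz_rule[OF fx_ok int_F cont_fx yV]) (auto simp: V_def)
    have "blinfun_apply (integral (cbox 0 1) (fx y)) h = lin3 (P y) (Q y) (R y) h" for h
    proof -
      obtain h1 h2 h3 where h: "h = (h1,h2,h3)" by (cases h) auto
      have "blinfun_apply (integral (cbox 0 1) (fx y)) h = integral (cbox 0 1) (\<lambda>t. blinfun_apply (fx y t) h)"
        by (rule blinfun_apply_integral[OF int_fx[OF yV]])
      also have "\<dots> = integral {0..1} (\<lambda>t. h1 * c0 y t + h2 * c1 y t + h3 * c2 y t)"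
        by (simp add: fx_apply h algebra_simps)
      also have "\<dots> = h1 * P y + h2 * Q y + h3 * R y"
        using ftc[OF yV]
        by (intro integral_unique has_integral_add has_integral_mult_right) auto
      finally show ?thesis by (simp add: h algebra_simps)
    qed
    then have "blinfun_apply (integral (cbox 0 1) (fx y)) = (\<lambda>(dx, du, dux). P y * dx + Q y * du + R y * dux)"
      by (auto simp: lin3_def algebra_simps)
    with L show "(I has_derivative (\<lambda>(dx, du, dux). P y * dx + Q y * du + R y * dux)) (at y)"
      using at_within_open[OF yV] V_def by simp
  qed
  then have "open V \<and> p \<in> V \<and> V \<subseteq> U \<and> (\<exists>I. solves_sys V I P Q R)"
    using r VU V_def by auto
  then show ?thesis by blast
qed



lemma Avf_eq: "Avf \<phi> h p = pd 0 h p + snd (snd p) * pd 1 h p + \<phi> p * pd 2 h p"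
  by (cases p) (simp add: Avf_def vf_def)

lemma Xvf_eq: "Xvf lam h p = pd 1 h p + lam p * pd 2 h p"
  by (simp add: Xvf_def vf_def)

lemma prol_eq: "prol \<phi> (\<lambda>_. 0) (\<lambda>_. 1) lam h p = pd 1 h p + lam p * pd 2 h p"
  by (simp add: prol_def vf_def prol_coeff_def Avf_eq pd_const0)

lemma gs_cond:
  assumes "gen_sym U \<phi> (\<lambda>_. 0) (\<lambda>_. 1) lam" "q \<in> U"
  shows "Xvf lam \<phi> q - Avf \<phi> lam q = lam q * lam q"
proof -
  define h :: "jet \<Rightarrow> real" where "h = (\<lambda>q. snd (snd q))"
  have sh: "smooth_on U h" unfolding h_def by (rule sm_v)
  have pdh: "pd 0 h = (\<lambda>_. 0)" "pd 1 h = (\<lambda>_. 0)" "pd 2 h = (\<lambda>_. 1)"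
    unfolding h_def using pd_global[of "\<lambda>q. snd (snd q)" "\<lambda>_. 0" "\<lambda>_. 0" "\<lambda>_. 1", OF hd_v] by auto
  have pdh': "pd 0 h x = 0" "pd 1 h x = 0" "pd 2 h x = 1" for x using pdh by simp_all
  have A: "Avf \<phi> h = \<phi>"
  proof
    fix x show "Avf \<phi> h x = \<phi> x" using Avf_eq[of \<phi> h x] pdh'[of x] by simp
  qed
  have X: "prol \<phi> (\<lambda>_. 0) (\<lambda>_. 1) lam h = lam"
  proof
    fix x show "prol \<phi> (\<lambda>_. 0) (\<lambda>_. 1) lam h x = lam x" using prol_eq[of \<phi> lam h x] pdh'[of x] by simp
  qed
  have "prol \<phi> (\<lambda>_. 0) (\<lambda>_. 1) lam (Avf \<phi> h) q - Avf \<phi> (prol \<phi> (\<lambda>_. 0) (\<lambda>_. 1) lam h) q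
        = lam q * prol \<phi> (\<lambda>_. 0) (\<lambda>_. 1) lam h q - (Avf \<phi> (\<lambda>_. 0) q + lam q * 0) * Avf \<phi> h q"
    using assms sh unfolding gen_sym_def by blast
  then show ?thesis by (simp add: A X prol_eq Xvf_eq Avf_eq pd_const0)
qed

lemma div_same: "a = X / Y \<Longrightarrow> b = Z / Y \<Longrightarrow> X = Z \<Longrightarrow> a = b" by simp

lemma closed_gen:
  fixes phi la lb fb gb :: "jet \<Rightarrow> real"
  assumes oU: "open U" and s: "smooth_on U phi" "smooth_on U la" "smooth_on U lb" "smooth_on U fb" "smooth_on U gb"
    and nz: "\<forall>q\<in>U. la q - lb q \<noteq> 0 \<and> fb q \<noteq> 0 \<and> gb q \<noteq> 0"
    and gsa: "\<forall>q\<in>U. Xvf la phi q - Avf phi la q = la q * la q"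
    and gsb: "\<forall>q\<in>U. Xvf lb phi q - Avf phi lb q = lb q * lb q"
    and hf: "\<forall>q\<in>U. Xvf la fb q * (la q - lb q) = (Xvf la lb q - Xvf lb la q) * fb q"
    and hg: "\<forall>q\<in>U. Avf phi gb q = (lb q - Avf phi fb q / fb q) * gb q \<and> Xvf la gb q = 0"
  shows "\<forall>q\<in>U. pd 1 (\<lambda>q. (la q * snd (snd q) - phi q) / (fb q * gb q * (lb q - la q))) q
                 = pd 0 (\<lambda>q. - la q / (fb q * gb q * (lb q - la q))) q
             \<and> pd 2 (\<lambda>q. (la q * snd (snd q) - phi q) / (fb q * gb q * (lb q - la q))) q
                 = pd 0 (\<lambda>q. 1 / (fb q * gb q * (lb q - la q))) q
             \<and> pd 2 (\<lambda>q. - la q / (fb q * gb q * (lb q - la q))) q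
                 = pd 1 (\<lambda>q. 1 / (fb q * gb q * (lb q - la q))) q"
proof
  fix q assume qU: "q \<in> U"
  have nzq: "la q - lb q \<noteq> 0" "fb q \<noteq> 0" "gb q \<noteq> 0" using nz qU by auto
  have Dnz: "fb q * gb q * (lb q - la q) \<noteq> 0" using nzq by auto
  note dphi = diff_pd[OF sm_diffble[OF s(1) qU]]
  note dla = diff_pd[OF sm_diffble[OF s(2) qU]]
  note dlb = diff_pd[OF sm_diffble[OF s(3) qU]]
  note dfb = diff_pd[OF sm_diffble[OF s(4) qU]]
  note dgb = diff_pd[OF sm_diffble[OF s(5) qU]]
  note dD = hd_mult[OF hd_mult[OF dfb dgb] hd_diff[OF dlb dla]]
  note dP = hd_divide[OF hd_diff[OF hd_mult[OF dla hd_v] dphi] dD Dnz]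
  note dQ = hd_divide[OF hd_minus[OF dla] dD Dnz]
  note dR = hd_divide[OF hd_const dD Dnz]
  define v where "v = snd (snd q)"
  have gsa': "pd 1 phi q + la q * pd 2 phi q - (pd 0 la q + v * pd 1 la q + phi q * pd 2 la q) = la q * la q"
    using gsa qU by (simp add: Xvf_eq Avf_eq v_def)
  have gsb': "pd 1 phi q + lb q * pd 2 phi q - (pd 0 lb q + v * pd 1 lb q + phi q * pd 2 lb q) = lb q * lb q"
    using gsb qU by (simp add: Xvf_eq Avf_eq v_def)
  have hf': "(pd 1 fb q + la q * pd 2 fb q) * (la q - lb q) = ((pd 1 lb q + la q * pd 2 lb q) - (pd 1 la q + lb q * pd 2 la q)) * fb q"
    using hf qU by (simp add: Xvf_eq)
  have hg1: "pd 0 gb q + v * pd 1 gb q + phi q * pd 2 gb q = (lb q - (pd 0 fb q + v * pd 1 fb q + phi q * pd 2 fb q) / fb q) * gb q"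
    using hg qU by (simp add: Avf_eq v_def)
  then have hg1': "fb q * (pd 0 gb q + v * pd 1 gb q + phi q * pd 2 gb q) = (lb q * fb q - (pd 0 fb q + v * pd 1 fb q + phi q * pd 2 fb q)) * gb q"
    using nzq by (simp add: field_simps)
  have hg2: "pd 1 gb q + la q * pd 2 gb q = 0"
    using hg qU by (simp add: Xvf_eq)
  show "pd 1 (\<lambda>q. (la q * snd (snd q) - phi q) / (fb q * gb q * (lb q - la q))) q
                 = pd 0 (\<lambda>q. - la q / (fb q * gb q * (lb q - la q))) q
             \<and> pd 2 (\<lambda>q. (la q * snd (snd q) - phi q) / (fb q * gb q * (lb q - la q))) q
                 = pd 0 (\<lambda>q. 1 / (fb q * gb q * (lb q - la q))) q
             \<and> pd 2 (\<lambda>q. - la q / (fb q * gb q * (lb q - la q))) q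
                 = pd 1 (\<lambda>q. 1 / (fb q * gb q * (lb q - la q))) q"
  proof (intro conjI)
    show "pd 1 (\<lambda>q. (la q * snd (snd q) - phi q) / (fb q * gb q * (lb q - la q))) q
                 = pd 0 (\<lambda>q. - la q / (fb q * gb q * (lb q - la q))) q"
      apply (rule div_same[OF pd_eq(2)[OF dP] pd_eq(1)[OF dQ]])
      using gsa' gsb' hf' hg1' hg2 unfolding v_def by algebra
    show "pd 2 (\<lambda>q. (la q * snd (snd q) - phi q) / (fb q * gb q * (lb q - la q))) q
                 = pd 0 (\<lambda>q. 1 / (fb q * gb q * (lb q - la q))) q"
      apply (rule div_same[OF pd_eq(3)[OF dP] pd_eq(1)[OF dR]])
      using gsa' gsb' hf' hg1' hg2 unfolding v_def by algebra
    show "pd 2 (\<lambda>q. - la q / (fb q * gb q * (lb q - la q))) q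
                 = pd 1 (\<lambda>q. 1 / (fb q * gb q * (lb q - la q))) q"
      apply (rule div_same[OF pd_eq(3)[OF dQ] pd_eq(2)[OF dR]])
      using gsa' gsb' hf' hg1' hg2 unfolding v_def by algebra
  qed
qed



lemma sol_hd:
  assumes "solves_sys V I P Q R" "q \<in> V"
  shows "(I has_derivative lin3 (P q) (Q q) (R q)) (at q)"
proof -
  have "(\<lambda>(dx, du, dux). P q * dx + Q q * du + R q * dux) = lin3 (P q) (Q q) (R q)"
    by (auto simp: lin3_def algebra_simps)
  then show ?thesis using assms unfolding solves_sys_def by metis
qed

lemma avf0: "(l * v - p) / D + v * (- l / D) + p * (1 / D) = (0::real)"
  by (cases "D = 0") (simp_all add: field_simps)
lemma prol0: "- l / D + l * (1 / D) = (0::real)"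
  by (cases "D = 0") (simp_all add: field_simps)

lemma sol_sub: "solves_sys V I P Q R \<Longrightarrow> W \<subseteq> V \<Longrightarrow> solves_sys W I P Q R"
  unfolding solves_sys_def by blast

lemma sol_smooth:
  assumes oV: "open V" and sol: "solves_sys V I P Q R"
    and s: "smooth_on V P" "smooth_on V Q" "smooth_on V R"
  shows "smooth_on V I"
proof -
  have e: "pd 0 I q = P q" "pd 1 I q = Q q" "pd 2 I q = R q" if "q \<in> V" for q
    using pd_eq[OF sol_hd[OF sol that]] by auto
  have "sm_n n V I" for n
  proof (cases n)
    case 0
    have "\<forall>q\<in>V. I differentiable (at q)" unfolding differentiable_def using sol_hd[OF sol] by blast
    then show ?thesis using 0 by (simp add: sm_n_0)
  next
    case (Suc m)
    have "sm_n m V (pd i I)" if i3: "i < 3" for i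
    proof -
      consider "i = 0" | "i = 1" | "i = 2" using i3 by linarith
      then show ?thesis
      proof cases
        case 1 then show ?thesis using sm_n_local[OF oV _ s(1)[unfolded smooth_sm_n, rule_format, of m]] e by auto
      next
        case 2 then show ?thesis using sm_n_local[OF oV _ s(2)[unfolded smooth_sm_n, rule_format, of m]] e by auto
      next
        case 3 then show ?thesis using sm_n_local[OF oV _ s(3)[unfolded smooth_sm_n, rule_format, of m]] e by auto
      qed
    qed
    moreover have "\<forall>q\<in>V. I differentiable (at q)" unfolding differentiable_def using sol_hd[OF sol] by blast
    ultimately show ?thesis using Suc by (simp add: sm_n_Suc)
  qed
  then show ?thesis by (simp add: smooth_sm_n)
qed

lemma sm_forms:
  fixes phi la lb fb gb :: "jet \<Rightarrow> real"
  assumes oU: "open U" and s: "smooth_on U phi" "smooth_on U la" "smooth_on U lb" "smooth_on U fb" "smooth_on U gb"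
    and nz: "\<forall>q\<in>U. la q - lb q \<noteq> 0 \<and> fb q \<noteq> 0 \<and> gb q \<noteq> 0"
  shows "smooth_on U (\<lambda>q. (la q * snd (snd q) - phi q) / (fb q * gb q * (lb q - la q)))"
    "smooth_on U (\<lambda>q. - la q / (fb q * gb q * (lb q - la q)))"
    "smooth_on U (\<lambda>q. 1 / (fb q * gb q * (lb q - la q)))"
proof -
  have sD: "smooth_on U (\<lambda>q. fb q * gb q * (lb q - la q))"
    by (rule sm_mult[OF oU sm_mult[OF oU s(4) s(5)] sm_diff[OF oU s(3) s(2)]])
  have nD: "\<forall>q\<in>U. fb q * gb q * (lb q - la q) \<noteq> 0" using nz by auto
  show "smooth_on U (\<lambda>q. (la q * snd (snd q) - phi q) / (fb q * gb q * (lb q - la q)))"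
    by (rule sm_divide[OF oU sm_diff[OF oU sm_mult[OF oU s(2) sm_v] s(1)] sD nD])
  show "smooth_on U (\<lambda>q. - la q / (fb q * gb q * (lb q - la q)))"
    by (rule sm_divide[OF oU sm_minus[OF oU s(2)] sD nD])
  show "smooth_on U (\<lambda>q. 1 / (fb q * gb q * (lb q - la q)))"
    by (rule sm_divide[OF oU sm_const sD nD])
qed

theorem theorem3:
  fixes U :: "jet set"
    and \<phi> lam1 lam2 f1 f2 g1 g2 :: "jet \<Rightarrow> real"
  defines "\<rho> \<equiv> (\<lambda>p. (Xvf lam1 lam2 p - Xvf lam2 lam1 p) / (lam1 p - lam2 p))"
    and "\<rho>1 \<equiv> (\<lambda>p. lam1 p - Avf \<phi> f1 p / f1 p)"
    and "\<rho>2 \<equiv> (\<lambda>p. lam2 p - Avf \<phi> f2 p / f2 p)"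
  assumes U_open: "open U"
    and sm: "smooth_on U \<phi>" "smooth_on U lam1" "smooth_on U lam2"
            "smooth_on U f1" "smooth_on U f2" "smooth_on U g1" "smooth_on U g2"
    and nz: "\<forall>p\<in>U. lam1 p - lam2 p \<noteq> 0 \<and> f1 p \<noteq> 0 \<and> f2 p \<noteq> 0 \<and> g1 p \<noteq> 0 \<and> g2 p \<noteq> 0"
    and sym1: "gen_sym U \<phi> (\<lambda>_. 0) (\<lambda>_. 1) lam1"
    and sym2: "gen_sym U \<phi> (\<lambda>_. 0) (\<lambda>_. 1) lam2"
    and noneq: "\<not> A_equiv U \<phi> (\<lambda>_. 0) (\<lambda>_. 1) lam1 (\<lambda>_. 0) (\<lambda>_. 1) lam2"
    and hf: "\<forall>p\<in>U. Xvf lam1 f2 p / f2 p = \<rho> p \<and> Xvf lam2 f1 p / f1 p = \<rho> p"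
    and hg1: "\<forall>p\<in>U. Avf \<phi> g1 p = \<rho>1 p * g1 p \<and> f2 p * Xvf lam2 g1 p = 0"
    and hg2: "\<forall>p\<in>U. Avf \<phi> g2 p = \<rho>2 p * g2 p \<and> f1 p * Xvf lam1 g2 p = 0"
  shows "(\<forall>p\<in>U. \<exists>V. open V \<and> p \<in> V \<and> V \<subseteq> U \<and> (\<exists>I1 I2.
            solves_sys V I1
              (\<lambda>q. (lam1 q * snd (snd q) - \<phi> q) / (f2 q * g2 q * (lam2 q - lam1 q)))
              (\<lambda>q. - lam1 q / (f2 q * g2 q * (lam2 q - lam1 q)))
              (\<lambda>q. 1 / (f2 q * g2 q * (lam2 q - lam1 q))) \<and>
            solves_sys V I2
              (\<lambda>q. (lam2 q * snd (snd q) - \<phi> q) / (f1 q * g1 q * (lam1 q - lam2 q)))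
              (\<lambda>q. - lam2 q / (f1 q * g1 q * (lam1 q - lam2 q)))
              (\<lambda>q. 1 / (f1 q * g1 q * (lam1 q - lam2 q)))))
       \<and> (\<forall>V I1 I2. open V \<and> V \<subseteq> U \<and>
            solves_sys V I1
              (\<lambda>q. (lam1 q * snd (snd q) - \<phi> q) / (f2 q * g2 q * (lam2 q - lam1 q)))
              (\<lambda>q. - lam1 q / (f2 q * g2 q * (lam2 q - lam1 q)))
              (\<lambda>q. 1 / (f2 q * g2 q * (lam2 q - lam1 q))) \<and>
            solves_sys V I2
              (\<lambda>q. (lam2 q * snd (snd q) - \<phi> q) / (f1 q * g1 q * (lam1 q - lam2 q)))
              (\<lambda>q. - lam2 q / (f1 q * g1 q * (lam1 q - lam2 q)))
              (\<lambda>q. 1 / (f1 q * g1 q * (lam1 q - lam2 q)))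
          \<longrightarrow> first_integral_assoc V \<phi> (\<lambda>_. 0) (\<lambda>_. 1) lam1 I1
            \<and> first_integral_assoc V \<phi> (\<lambda>_. 0) (\<lambda>_. 1) lam2 I2
            \<and> func_indep V I1 I2)"
proof -
  have nzq: "lam1 q \<noteq> lam2 q" "f1 q \<noteq> 0" "f2 q \<noteq> 0" "g1 q \<noteq> 0" "g2 q \<noteq> 0" if "q \<in> U" for q
    using nz that by auto
  have gs1: "\<forall>q\<in>U. Xvf lam1 \<phi> q - Avf \<phi> lam1 q = lam1 q * lam1 q" using gs_cond[OF sym1] by blast
  have gs2: "\<forall>q\<in>U. Xvf lam2 \<phi> q - Avf \<phi> lam2 q = lam2 q * lam2 q" using gs_cond[OF sym2] by blast
  have hf1: "\<forall>q\<in>U. Xvf lam1 f2 q * (lam1 q - lam2 q) = (Xvf lam1 lam2 q - Xvf lam2 lam1 q) * f2 q"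
  proof
    fix q assume q: "q \<in> U"
    have "Xvf lam1 f2 q / f2 q = (Xvf lam1 lam2 q - Xvf lam2 lam1 q) / (lam1 q - lam2 q)"
      using hf q by (simp add: \<rho>_def)
    then show "Xvf lam1 f2 q * (lam1 q - lam2 q) = (Xvf lam1 lam2 q - Xvf lam2 lam1 q) * f2 q"
      using nzq[OF q] by (simp add: frac_eq_eq)
  qed
  have hf2: "\<forall>q\<in>U. Xvf lam2 f1 q * (lam2 q - lam1 q) = (Xvf lam2 lam1 q - Xvf lam1 lam2 q) * f1 q"
  proof
    fix q assume q: "q \<in> U"
    have "Xvf lam2 f1 q / f1 q = (Xvf lam1 lam2 q - Xvf lam2 lam1 q) / (lam1 q - lam2 q)"
      using hf q by (simp add: \<rho>_def)
    then have "Xvf lam2 f1 q * (lam1 q - lam2 q) = (Xvf lam1 lam2 q - Xvf lam2 lam1 q) * f1 q"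
      using nzq[OF q] by (simp add: frac_eq_eq)
    then show "Xvf lam2 f1 q * (lam2 q - lam1 q) = (Xvf lam2 lam1 q - Xvf lam1 lam2 q) * f1 q"
      by (simp add: algebra_simps)
  qed
  have hgA: "\<forall>q\<in>U. Avf \<phi> g2 q = (lam2 q - Avf \<phi> f2 q / f2 q) * g2 q \<and> Xvf lam1 g2 q = 0"
    using hg2 nzq by (simp add: \<rho>2_def)
  have hgB: "\<forall>q\<in>U. Avf \<phi> g1 q = (lam1 q - Avf \<phi> f1 q / f1 q) * g1 q \<and> Xvf lam2 g1 q = 0"
    using hg1 nzq by (simp add: \<rho>1_def)
  have nzA: "\<forall>q\<in>U. lam1 q - lam2 q \<noteq> 0 \<and> f2 q \<noteq> 0 \<and> g2 q \<noteq> 0" using nz by auto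
  have nzB: "\<forall>q\<in>U. lam2 q - lam1 q \<noteq> 0 \<and> f1 q \<noteq> 0 \<and> g1 q \<noteq> 0" using nz by auto
  note cl1 = closed_gen[OF U_open sm(1) sm(2) sm(3) sm(5) sm(7) nzA gs1 gs2 hf1 hgA]
  note cl2 = closed_gen[OF U_open sm(1) sm(3) sm(2) sm(4) sm(6) nzB gs2 gs1 hf2 hgB]
  note sA = sm_forms[OF U_open sm(1) sm(2) sm(3) sm(5) sm(7) nzA]
  note sB = sm_forms[OF U_open sm(1) sm(3) sm(2) sm(4) sm(6) nzB]
  show ?thesis
  proof (intro conjI ballI allI impI)
    fix p assume pU: "p \<in> U"
    obtain V1 I1 where V1: "open V1" "p \<in> V1" "V1 \<subseteq> U"
      "solves_sys V1 I1
              (\<lambda>q. (lam1 q * snd (snd q) - \<phi> q) / (f2 q * g2 q * (lam2 q - lam1 q)))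
              (\<lambda>q. - lam1 q / (f2 q * g2 q * (lam2 q - lam1 q)))
              (\<lambda>q. 1 / (f2 q * g2 q * (lam2 q - lam1 q)))"
      using poincare[OF U_open pU sA cl1] by blast
    obtain V2 I2 where V2: "open V2" "p \<in> V2" "V2 \<subseteq> U"
      "solves_sys V2 I2
              (\<lambda>q. (lam2 q * snd (snd q) - \<phi> q) / (f1 q * g1 q * (lam1 q - lam2 q)))
              (\<lambda>q. - lam2 q / (f1 q * g1 q * (lam1 q - lam2 q)))
              (\<lambda>q. 1 / (f1 q * g1 q * (lam1 q - lam2 q)))"
      using poincare[OF U_open pU sB cl2] by blast
    show "\<exists>V. open V \<and> p \<in> V \<and> V \<subseteq> U \<and> (\<exists>I1 I2.
            solves_sys V I1
              (\<lambda>q. (lam1 q * snd (snd q) - \<phi> q) / (f2 q * g2 q * (lam2 q - lam1 q)))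
              (\<lambda>q. - lam1 q / (f2 q * g2 q * (lam2 q - lam1 q)))
              (\<lambda>q. 1 / (f2 q * g2 q * (lam2 q - lam1 q))) \<and>
            solves_sys V I2
              (\<lambda>q. (lam2 q * snd (snd q) - \<phi> q) / (f1 q * g1 q * (lam1 q - lam2 q)))
              (\<lambda>q. - lam2 q / (f1 q * g1 q * (lam1 q - lam2 q)))
              (\<lambda>q. 1 / (f1 q * g1 q * (lam1 q - lam2 q))))"
      using V1 V2 sol_sub[OF V1(4), of "V1 \<inter> V2"] sol_sub[OF V2(4), of "V1 \<inter> V2"]
      by (intro exI[of _ "V1 \<inter> V2"]) auto
  next
    fix V I1 I2
    assume a: "open V \<and> V \<subseteq> U \<and>
            solves_sys V I1
              (\<lambda>q. (lam1 q * snd (snd q) - \<phi> q) / (f2 q * g2 q * (lam2 q - lam1 q)))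
              (\<lambda>q. - lam1 q / (f2 q * g2 q * (lam2 q - lam1 q)))
              (\<lambda>q. 1 / (f2 q * g2 q * (lam2 q - lam1 q))) \<and>
            solves_sys V I2
              (\<lambda>q. (lam2 q * snd (snd q) - \<phi> q) / (f1 q * g1 q * (lam1 q - lam2 q)))
              (\<lambda>q. - lam2 q / (f1 q * g1 q * (lam1 q - lam2 q)))
              (\<lambda>q. 1 / (f1 q * g1 q * (lam1 q - lam2 q)))"
    then have oV: "open V" and VU: "V \<subseteq> U" and sol1: "solves_sys V I1
              (\<lambda>q. (lam1 q * snd (snd q) - \<phi> q) / (f2 q * g2 q * (lam2 q - lam1 q)))
              (\<lambda>q. - lam1 q / (f2 q * g2 q * (lam2 q - lam1 q)))
              (\<lambda>q. 1 / (f2 q * g2 q * (lam2 q - lam1 q)))"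
      and sol2: "solves_sys V I2
              (\<lambda>q. (lam2 q * snd (snd q) - \<phi> q) / (f1 q * g1 q * (lam1 q - lam2 q)))
              (\<lambda>q. - lam2 q / (f1 q * g1 q * (lam1 q - lam2 q)))
              (\<lambda>q. 1 / (f1 q * g1 q * (lam1 q - lam2 q)))" by auto
    note e1 = pd_eq[OF sol_hd[OF sol1]]
    note e2 = pd_eq[OF sol_hd[OF sol2]]
    have nzV: "lam1 q \<noteq> lam2 q" "f1 q \<noteq> 0" "f2 q \<noteq> 0" "g1 q \<noteq> 0" "g2 q \<noteq> 0" if "q \<in> V" for q
      using nzq[OF subsetD[OF VU that]] by auto
    show "first_integral_assoc V \<phi> (\<lambda>_. 0) (\<lambda>_. 1) lam1 I1"
      unfolding first_integral_assoc_def
    proof (intro conjI ballI)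
      show "smooth_on V I1"
        using sol_smooth[OF oV sol1] sm_subset[OF sA(1) VU] sm_subset[OF sA(2) VU] sm_subset[OF sA(3) VU] by blast
    next
      fix q assume q: "q \<in> V"
      have d: "f2 q * g2 q * (lam2 q - lam1 q) \<noteq> 0" using nzV[OF q] by auto
      show "Avf \<phi> I1 q = 0"
        unfolding Avf_eq e1[OF q] by (rule avf0)
      show "prol \<phi> (\<lambda>_. 0) (\<lambda>_. 1) lam1 I1 q = 0"
        unfolding prol_eq e1[OF q] by (rule prol0)
    qed
    show "first_integral_assoc V \<phi> (\<lambda>_. 0) (\<lambda>_. 1) lam2 I2"
      unfolding first_integral_assoc_def
    proof (intro conjI ballI)
      show "smooth_on V I2"
        using sol_smooth[OF oV sol2] sm_subset[OF sB(1) VU] sm_subset[OF sB(2) VU] sm_subset[OF sB(3) VU] by blast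
    next
      fix q assume q: "q \<in> V"
      have d: "f1 q * g1 q * (lam1 q - lam2 q) \<noteq> 0" using nzV[OF q] by auto
      show "Avf \<phi> I2 q = 0"
        unfolding Avf_eq e2[OF q] by (rule avf0)
      show "prol \<phi> (\<lambda>_. 0) (\<lambda>_. 1) lam2 I2 q = 0"
        unfolding prol_eq e2[OF q] by (rule prol0)
    qed
    show "func_indep V I1 I2"
      unfolding func_indep_def
    proof (intro ballI allI impI)
      fix q a b assume q: "q \<in> V" and h: "\<forall>i<3. a * pd i I1 q + b * pd i I2 q = 0"
      define D1 where "D1 = f2 q * g2 q * (lam2 q - lam1 q)"
      define D2 where "D2 = f1 q * g1 q * (lam1 q - lam2 q)"
      have d: "D1 \<noteq> 0" "D2 \<noteq> 0" using nzV[OF q] by (auto simp: D1_def D2_def)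
      have h1: "a * (- lam1 q / D1) + b * (- lam2 q / D2) = 0"
        using h[rule_format, of 1] unfolding e1(2)[OF q] e2(2)[OF q] by (simp add: D1_def D2_def)
      have h2: "a * (1 / D1) + b * (1 / D2) = 0"
        using h[rule_format, of 2] unfolding e1(3)[OF q] e2(3)[OF q] by (simp add: D1_def D2_def)
      have h1': "lam1 q * (a / D1) + lam2 q * (b / D2) = 0" using h1 by (simp add: field_simps)
      have h2': "b / D2 = - (a / D1)" using h2 by (simp add: field_simps)
      have "(lam1 q - lam2 q) * (a / D1) = 0" using h1' h2' by (simp add: algebra_simps)
      then have "a / D1 = 0" using nzV[OF q] by simp
      then have a0: "a = 0" using d by simp
      then have "b / D2 = 0" using h2' by simp
      then show "a = 0 \<and> b = 0" using a0 d by simp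
    qed
  qed
qed


end
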